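(* Let $n\ge 4$, let $\beta\in PB_n$ be a Brunnian braid, and let $i,j,k\in\{1,\dots,n\}$ be distinct. Then $\phi_{(i,j,k)}(\phi_n(\beta))=1$ in the group $F$ defined below.
   Context: $PB_n$ is the pure braid group with standard generators $b_{ij}$ ($1\le i<j\le n$); $\beta$ is Brunnian if deleting any single strand (the homomorphism $PB_n\to PB_{n-1}$ sending $b_{ij}\mapsto 1$ if $m\in\{i,j\}$ and relabelling indices $>m$ down by one otherwise) gives the trivial braid, for every strand $m$. $G_n^3$ is the group with generators $a_{ijk}$, one for each $3$-element subset $\{i,j,k\}\subset\{1,\dots,n\}$ (symmetric in the indices), and relations $a_{ijk}^2=1$; $a_{ijk}a_{stu}=a_{stu}a_{ijk}$ if $|\{i,j,k\}\cap\{s,t,u\}|<2$; $a_{ijk}a_{ijl}a_{ikl}a_{jkl}=a_{jkl}a_{ikl}a_{ijl}a_{ijk}$ for distinct $i,j,k,l$. For $1\le i<j\le n$ let $c_{i,j}=a_{i,j,j+1}\cdots a_{i,j,n}\,a_{i,j,1}\cdots a_{i,j,j-1}$ (factor with third index $i$ omitted), and let $\phi_n\colon PB_n\to G_n^3$ be the homomorphism $\phi_n(b_{ij})=c_{i,i+1}^{-1}\cdots c_{i,j-1}^{-1}c_{i,j}^2c_{i,j-1}\cdots c_{i,i+1}$. Fix distinct $i,j,k$. Let $F$ be the group generated by all maps $\sigma\colon\{1,\dots,n\}\setminus\{i,j,k\}\to\mathbb{Z}_2\times\mathbb{Z}_2$ subject only to $\sigma^2=1$ (a free product of $2^{2(n-3)}$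 copies of $\mathbb{Z}_2$). For a word $w$ in the generators of $G_n^3$ and each occurrence $c$ of the letter $a_{ijk}$ in $w$, define $i_c\colon\{1,\dots,n\}\setminus\{i,j,k\}\to\mathbb{Z}_2\times\mathbb{Z}_2$ by $i_c(l)=(N_{jkl}+N_{ijl},\,N_{ikl}+N_{ijl})\bmod 2$, where $N_{stu}$ is the number of occurrences of $a_{stu}$ in $w$ before $c$. If $c_1,\dots,c_m$ are the occurrences of $a_{ijk}$ in $w$ in order, set $\phi_{(i,j,k)}(w)=i_{c_1}i_{c_2}\cdots i_{c_m}\in F$. It is a standing fact from the paper that on the subgroup of even elements of $G_n^3$, which contains $\phi_n(PB_n)$, this value depends only on the group element represented by $w$; thus $\phi_{(i,j,k)}\circ\phi_n\colon PB_n\to F$ is well defined. *)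

theory Defs
  imports Main
begin

text \<open>A braid word: letters (a, True) = sigma_a, (a, False) = sigma_a inverse, 1 <= a <= m-1.\<close>
type_synonym bword = "(nat \<times> bool) list"

inductive braid_step :: "nat \<Rightarrow> bword \<Rightarrow> bword \<Rightarrow> bool" for m :: nat where
  free_red: "\<lbrakk>1 \<le> a; a < m\<rbrakk> \<Longrightarrow>
     braid_step m (xs @ [(a, e), (a, \<not> e)] @ ys) (xs @ ys)"
| far_comm: "\<lbrakk>1 \<le> a; a < m; 1 \<le> b; b < m; a + 2 \<le> b\<rbrakk> \<Longrightarrow>
     braid_step m (xs @ [(a, True), (b, True)] @ ys) (xs @ [(b, True), (a, True)] @ ys)"
| braid_rel: "\<lbrakk>1 \<le> a; a + 1 < m\<rbrakk> \<Longrightarrow>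
     braid_step m (xs @ [(a, True), (a + 1, True), (a, True)] @ ys)
                  (xs @ [(a + 1, True), (a, True), (a + 1, True)] @ ys)"

definition braid_trivial :: "nat \<Rightarrow> bword \<Rightarrow> bool" where
  "braid_trivial m w \<longleftrightarrow> equivclp (braid_step m) w []"

definition binv :: "bword \<Rightarrow> bword" where
  "binv w = rev (map (\<lambda>(a, e). (a, \<not> e)) w)"

definition pb_gen :: "nat \<Rightarrow> nat \<Rightarrow> bword" where
  "pb_gen i j = map (\<lambda>a. (a, True)) (rev [i+1..<j]) @ [(i, True), (i, True)]
                @ map (\<lambda>a. (a, False)) [i+1..<j]"

text \<open>Words in the generators b_ij and their inverses: ((i,j), True) = b_ij, ((i,j), False) = b_ij inverse.\<close>
type_synonym pword = "((nat \<times> nat) \<times> bool) list"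

definition pb_word :: "nat \<Rightarrow> pword \<Rightarrow> bool" where
  "pb_word n w \<longleftrightarrow> (\<forall>((i, j), e) \<in> set w. 1 \<le> i \<and> i < j \<and> j \<le> n)"

definition pb_expand :: "pword \<Rightarrow> bword" where
  "pb_expand w = concat (map (\<lambda>((i, j), e). if e then pb_gen i j else binv (pb_gen i j)) w)"

definition relabel :: "nat \<Rightarrow> nat \<Rightarrow> nat" where
  "relabel m x = (if x > m then x - 1 else x)"

definition delete_strand :: "nat \<Rightarrow> pword \<Rightarrow> pword" where
  "delete_strand m w = concat (map (\<lambda>((i, j), e).
      if m = i \<or> m = j then [] else [((relabel m i, relabel m j), e)]) w)"

definition brunnian :: "nat \<Rightarrow> pword \<Rightarrow> bool" where
  "brunnian n w \<longleftrightarrow> pb_word n w \<and>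
     (\<forall>m \<in> {1..n}. braid_trivial (n - 1) (pb_expand (delete_strand m w)))"

text \<open>Letters of G_n^3 are 3-element subsets; since a^2 = 1, the inverse of a word is its reverse.\<close>
definition c_word :: "nat \<Rightarrow> nat \<Rightarrow> nat \<Rightarrow> nat set list" where
  "c_word n i j = map (\<lambda>l. {i, j, l}) (filter (\<lambda>l. l \<noteq> i) ([j+1..<n+1] @ [1..<j]))"

definition phi_gen :: "nat \<Rightarrow> nat \<Rightarrow> nat \<Rightarrow> nat set list" where
  "phi_gen n i j =
     (let P = concat (map (c_word n i) (rev [i+1..<j]))
      in rev P @ c_word n i j @ c_word n i j @ P)"

definition phi_n :: "nat \<Rightarrow> pword \<Rightarrow> nat set list" where
  "phi_n n w = concat (map (\<lambda>((i, j), e). if e then phi_gen n i j else rev (phi_gen n i j)) w)"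

text \<open>Generators of F: maps from {1..n} - {i,j,k} to Z2 x Z2 (= bool x bool),
  represented extensionally (value (False,False) outside the domain).\<close>
definition i_c :: "nat \<Rightarrow> nat \<Rightarrow> nat \<Rightarrow> nat \<Rightarrow> nat set list \<Rightarrow> (nat \<Rightarrow> bool \<times> bool)" where
  "i_c n i j k pre = (\<lambda>l. if l \<in> {1..n} - {i, j, k} then
      (odd (count_list pre {j, k, l} + count_list pre {i, j, l}),
       odd (count_list pre {i, k, l} + count_list pre {i, j, l}))
    else (False, False))"

definition phi_ijk :: "nat \<Rightarrow> nat \<Rightarrow> nat \<Rightarrow> nat \<Rightarrow> nat set list \<Rightarrow> (nat \<Rightarrow> bool \<times> bool) list" where
  "phi_ijk n i j k g = map (\<lambda>p. i_c n i j k (take p g))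
      (filter (\<lambda>p. g ! p = {i, j, k}) [0..<length g])"

inductive F_step :: "'a list \<Rightarrow> 'a list \<Rightarrow> bool" where
  "F_step (xs @ [s, s] @ ys) (xs @ ys)"

definition F_trivial :: "'a list \<Rightarrow> bool" where
  "F_trivial w \<longleftrightarrow> equivclp F_step w []"

end

theory Submission
  imports Defs
begin


definition feq :: "'a list \<Rightarrow> 'a list \<Rightarrow> bool" where
  "feq = equivclp F_step"

lemma F_step_ctx: "F_step u v \<Longrightarrow> F_step (p @ u @ q) (p @ v @ q)"
proof (induction rule: F_step.induct)
  case (1 xs s ys)
  have "F_step ((p @ xs) @ [s, s] @ (ys @ q)) ((p @ xs) @ (ys @ q))" by (rule F_step.intros)
  then show ?case by simp
qed

lemma feq_refl[simp]: "feq a a" by (simp add: feq_def)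
lemma feq_sym: "feq a b \<Longrightarrow> feq b a" unfolding feq_def by (rule equivclp_sym)
lemma feq_trans: "feq a b \<Longrightarrow> feq b c \<Longrightarrow> feq a c" unfolding feq_def by (rule equivclp_trans)

lemma feq_ctx: "feq u v \<Longrightarrow> feq (p @ u @ q) (p @ v @ q)"
  unfolding feq_def
proof (induction rule: equivclp_induct)
  case base then show ?case by simp
next
  case (step y z)
  have "equivclp F_step (p @ y @ q) (p @ z @ q)"
  proof -
    from step(2) show ?thesis
    proof
      assume "F_step y z" then show ?thesis using F_step_ctx by (metis r_into_equivclp)
    next
      assume "F_step z y" then show ?thesis using F_step_ctx
        by (metis equivclp_sym r_into_equivclp)
    qed
  qed
  then show ?case using step(3) by (metis equivclp_trans)
qed

lemma feq_append: "feq a b \<Longrightarrow> feq c d \<Longrightarrow> feq (a @ c) (b @ d)"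
proof -
  assume 1: "feq a b" and 2: "feq c d"
  have "feq ([] @ a @ c) ([] @ b @ c)" using feq_ctx[OF 1] by blast
  moreover have "feq (b @ c @ []) (b @ d @ [])" using feq_ctx[OF 2] by blast
  ultimately show ?thesis by (auto intro: feq_trans)
qed

lemma feq_cancel: "feq (xs @ [s, s] @ ys) (xs @ ys)"
  unfolding feq_def by (rule r_into_equivclp) (rule F_step.intros)

lemma F_step_map: "F_step u v \<Longrightarrow> F_step (map f u) (map f v)"
  by (induction rule: F_step.induct) (simp add: F_step.intros[of "map f xs" "f s" "map f ys" for xs s ys, simplified])

lemma F_step_rev: "F_step u v \<Longrightarrow> F_step (rev u) (rev v)"
  by (induction rule: F_step.induct) (simp add: F_step.intros[of "rev ys" s "rev xs" for xs s ys, simplified])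

lemma feq_lift:
  assumes "\<And>u v. F_step u v \<Longrightarrow> F_step (h u) (h v)"
  shows "feq a b \<Longrightarrow> feq (h a) (h b)"
  unfolding feq_def
proof (induction rule: equivclp_induct)
  case base then show ?case by simp
next
  case (step y z)
  have "equivclp F_step (h y) (h z)"
    using step(2) assms by (metis equivclp_sym r_into_equivclp)
  then show ?case using step(3) by (metis equivclp_trans)
qed

lemma feq_map: "feq a b \<Longrightarrow> feq (map f a) (map f b)"
  using feq_lift[of "map f"] F_step_map by blast

lemma feq_rev: "feq a b \<Longrightarrow> feq (rev a) (rev b)"
  using feq_lift[of rev] F_step_rev by blast

lemma feq_rev_cancel: "feq (rev x @ x) []"
proof (induction x)
  case Nil then show ?case by simp
next
  case (Cons a x)
  have "feq (rev x @ [a, a] @ x) (rev x @ x)" by (rule feq_cancel)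
  then show ?case using Cons by (auto intro: feq_trans)
qed

lemma feq_rev_cancel2: "feq (x @ rev x) []"
  using feq_rev_cancel[of "rev x"] by simp

lemma F_trivial_feq: "F_trivial w \<longleftrightarrow> feq w []"
  by (simp add: F_trivial_def feq_def)

definition pxor :: "bool \<times> bool \<Rightarrow> bool \<times> bool \<Rightarrow> bool \<times> bool" where
  "pxor a b = (fst a \<noteq> fst b, snd a \<noteq> snd b)"

definition fx :: "(nat \<Rightarrow> bool \<times> bool) \<Rightarrow> (nat \<Rightarrow> bool \<times> bool) \<Rightarrow> (nat \<Rightarrow> bool \<times> bool)" where
  "fx f g = (\<lambda>l. pxor (f l) (g l))"

definition Z0 :: "nat \<Rightarrow> bool \<times> bool" where "Z0 = (\<lambda>_. (False, False))"

lemma fx_assoc: "fx (fx a b) c = fx a (fx b c)"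
  by (auto simp: fx_def pxor_def)
lemma fx_comm: "fx a b = fx b a"
  by (auto simp: fx_def pxor_def)
lemma fx_self: "fx a a = Z0"
  by (auto simp: fx_def pxor_def Z0_def)
lemma fx_Z0[simp]: "fx a Z0 = a" "fx Z0 a = a"
  by (auto simp: fx_def pxor_def Z0_def)
lemma fx_self2: "fx a (fx a b) = b"
  by (rule ext) (auto simp: fx_def pxor_def prod_eq_iff)

fun emt :: "nat \<Rightarrow> nat \<Rightarrow> nat \<Rightarrow> nat \<Rightarrow> nat set list \<Rightarrow> nat set list \<Rightarrow> (nat \<Rightarrow> bool \<times> bool) list" where
  "emt n i j k pre [] = []"
| "emt n i j k pre (x # g) = (if x = {i, j, k} then [i_c n i j k pre] else []) @ emt n i j k (pre @ [x]) g"

lemma emt_gen: "map (\<lambda>p. i_c n i j k (pre @ take p g)) (filter (\<lambda>p. g ! p = {i, j, k}) [0..<length g])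
   = emt n i j k pre g"
proof (induction g arbitrary: pre)
  case Nil then show ?case by simp
next
  case (Cons x g)
  have u: "[0..<length (x # g)] = 0 # map Suc [0..<length g]"
    by (simp add: upt_conv_Cons map_Suc_upt del: upt_Suc)
  have A: "map (\<lambda>p. i_c n i j k (pre @ take p (x # g))) (filter (\<lambda>p. (x # g) ! p = {i, j, k}) (map Suc [0..<length g]))
     = map (\<lambda>p. i_c n i j k ((pre @ [x]) @ take p g)) (filter (\<lambda>p. g ! p = {i, j, k}) [0..<length g])"
    by (simp add: filter_map comp_def)
  also have "\<dots> = emt n i j k (pre @ [x]) g" by (rule Cons.IH)
  finally have B: "map (\<lambda>p. i_c n i j k (pre @ take p (x # g))) (filter (\<lambda>p. (x # g) ! p = {i, j, k}) (map Suc [0..<length g]))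
     = emt n i j k (pre @ [x]) g" .
  have "map (\<lambda>p. i_c n i j k (pre @ take p (x # g))) (filter (\<lambda>p. (x # g) ! p = {i, j, k}) [0..<length (x # g)])
     = (if x = {i, j, k} then [i_c n i j k pre] else []) @ map (\<lambda>p. i_c n i j k (pre @ take p (x # g))) (filter (\<lambda>p. (x # g) ! p = {i, j, k}) (map Suc [0..<length g]))"
    unfolding u by simp
  then show ?case using B by simp
qed

lemma phi_ijk_emt: "phi_ijk n i j k g = emt n i j k [] g"
  using emt_gen[of n i j k "[]" g] by (simp add: phi_ijk_def)

lemma ic_append: "i_c n i j k (a @ b) = fx (i_c n i j k a) (i_c n i j k b)"
  by (auto simp: i_c_def fx_def pxor_def)

lemma ic_Nil[simp]: "i_c n i j k [] = Z0"
  by (auto simp: i_c_def Z0_def)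

lemma ic_rev[simp]: "i_c n i j k (rev g) = i_c n i j k g"
  unfolding i_c_def count_list_rev ..

lemma ic_T: "i \<noteq> j \<Longrightarrow> i \<noteq> k \<Longrightarrow> j \<noteq> k \<Longrightarrow> i_c n i j k [{i, j, k}] = Z0"
  by (auto simp: i_c_def Z0_def fun_eq_iff insert_eq_iff doubleton_eq_iff insert_commute)

lemma emt_shift: "emt n i j k pre g = map (fx (i_c n i j k pre)) (emt n i j k [] g)"
proof (induction g arbitrary: pre)
  case Nil then show ?case by simp
next
  case (Cons x g)
  show ?case
    using Cons.IH[of "pre @ [x]"] Cons.IH[of "[x]"]
    by (simp add: ic_append fx_assoc)
qed

lemma emt_append: "emt n i j k pre (a @ b) = emt n i j k pre a @ emt n i j k (pre @ a) b"
  by (induction a arbitrary: pre) auto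

lemma emt_append0: "emt n i j k [] (a @ b) = emt n i j k [] a @ map (fx (i_c n i j k a)) (emt n i j k [] b)"
  using emt_append[of n i j k "[]" a b] emt_shift[of n i j k a b] by simp

lemma emt_none: "{i, j, k} \<notin> set g \<Longrightarrow> emt n i j k pre g = []"
  by (induction g arbitrary: pre) auto

lemma emt_rev:
  assumes "i \<noteq> j" "i \<noteq> k" "j \<noteq> k"
  shows "emt n i j k [] (rev g) = rev (map (fx (i_c n i j k g)) (emt n i j k [] g))"
proof (induction g)
  case Nil then show ?case by simp
next
  case (Cons x g)
  have 1: "emt n i j k [] (rev (x # g)) = emt n i j k [] (rev g) @ map (fx (i_c n i j k g)) (emt n i j k [] [x])"
    using emt_append0[of n i j k "rev g" "[x]"] by simp
  have 2: "emt n i j k [] (x # g) = emt n i j k [] [x] @ map (fx (i_c n i j k [x])) (emt n i j k [] g)"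
    using emt_append0[of n i j k "[x]" g] by simp
  have 3: "i_c n i j k (x # g) = fx (i_c n i j k [x]) (i_c n i j k g)"
    using ic_append[of n i j k "[x]" g] by simp
  have 4: "map (fx (i_c n i j k g)) (emt n i j k [] [x]) = map (fx (fx (i_c n i j k [x]) (i_c n i j k g))) (emt n i j k [] [x])"
    using ic_T[OF assms, of n] by simp
  show ?case
    unfolding 1 2 3 Cons.IH using 4
    by (simp add: fx_assoc fx_comm[of "i_c n i j k g"] fx_self2)
qed

lemma ic_phi_gen: "i_c n i j k (phi_gen n s t) = Z0"
  by (simp add: phi_gen_def Let_def ic_append fx_self2 fx_self)

lemma emt_phi_n:
  assumes "i \<noteq> j" "i \<noteq> k" "j \<noteq> k"
  shows "emt n i j k [] (phi_n n w) = concat (map (\<lambda>((s, t), e). if e then emt n i j k [] (phi_gen n s t)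
     else rev (emt n i j k [] (phi_gen n s t))) w)"
proof (induction w)
  case Nil then show ?case by (simp add: phi_n_def)
next
  case (Cons x w)
  obtain s t e where x: "x = ((s, t), e)" by (metis prod.collapse)
  have "phi_n n (x # w) = (if e then phi_gen n s t else rev (phi_gen n s t)) @ phi_n n w"
    by (simp add: phi_n_def x)
  then show ?case using Cons emt_append0[of n i j k _ "phi_n n w"] emt_rev[OF assms, of n "phi_gen n s t"]
    by (simp add: x ic_phi_gen map_idI)
qed
lemma trip: fixes s t x a b l :: nat
  assumes "s \<noteq> t" "x \<noteq> s" "x \<noteq> t"
  shows "({s, t, x} = {a, b, l}) \<longleftrightarrow>
     (s = a \<and> t = b \<and> x = l) \<or> (s = b \<and> t = a \<and> x = l) \<or>
     (s = a \<and> t = l \<and> x = b) \<or> (s = l \<and> t = a \<and> x = b) \<or>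
     (s = b \<and> t = l \<and> x = a) \<or> (s = l \<and> t = b \<and> x = a)"
proof
  assume e: "{s, t, x} = {a, b, l}"
  have "s \<in> {a, b, l}" "t \<in> {a, b, l}" "x \<in> {a, b, l}" using e by (metis insertCI)+
  moreover have "a \<in> {s, t, x}" "b \<in> {s,t,x}" "l \<in> {s,t,x}" using e by (metis insertCI)+
  ultimately show "(s = a \<and> t = b \<and> x = l) \<or> (s = b \<and> t = a \<and> x = l) \<or>
     (s = a \<and> t = l \<and> x = b) \<or> (s = l \<and> t = a \<and> x = b) \<or>
     (s = b \<and> t = l \<and> x = a) \<or> (s = l \<and> t = b \<and> x = a)" using assms by auto
next
  assume "(s = a \<and> t = b \<and> x = l) \<or> (s = b \<and> t = a \<and> x = l) \<or>
     (s = a \<and> t = l \<and> x = b) \<or> (s = l \<and> t = a \<and> x = b) \<or>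
     (s = b \<and> t = l \<and> x = a) \<or> (s = l \<and> t = b \<and> x = a)"
  then show "{s, t, x} = {a, b, l}" by (auto simp: insert_commute)
qed

lemma count_map3:
  fixes s t a b l :: nat
  assumes "distinct Q" "s \<notin> set Q" "t \<notin> set Q" "s \<noteq> t" "a \<noteq> b" "a \<noteq> l" "b \<noteq> l"
  shows "count_list (map (\<lambda>x. {s, t, x}) Q) {a, b, l} =
    (if l \<in> set Q \<and> (s = a \<and> t = b \<or> s = b \<and> t = a) then 1 else 0) +
    (if b \<in> set Q \<and> (s = a \<and> t = l \<or> s = l \<and> t = a) then 1 else 0) +
    (if a \<in> set Q \<and> (s = b \<and> t = l \<or> s = l \<and> t = b) then 1 else 0)"
  using assms
proof (induction Q)
  case Nil then show ?case by simp
next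
  case (Cons x Q)
  have IH: "count_list (map (\<lambda>x. {s, t, x}) Q) {a, b, l} =
    (if l \<in> set Q \<and> (s = a \<and> t = b \<or> s = b \<and> t = a) then 1 else 0) +
    (if b \<in> set Q \<and> (s = a \<and> t = l \<or> s = l \<and> t = a) then 1 else 0) +
    (if a \<in> set Q \<and> (s = b \<and> t = l \<or> s = l \<and> t = b) then 1 else 0)"
    using Cons by simp
  have tr: "({s, t, x} = {a, b, l}) \<longleftrightarrow>
     (s = a \<and> t = b \<and> x = l) \<or> (s = b \<and> t = a \<and> x = l) \<or>
     (s = a \<and> t = l \<and> x = b) \<or> (s = l \<and> t = a \<and> x = b) \<or>
     (s = b \<and> t = l \<and> x = a) \<or> (s = l \<and> t = b \<and> x = a)"
    using Cons.prems by (intro trip) auto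
  show ?case using Cons.prems unfolding list.map count_list.simps IH tr
    by auto
qed

lemma cw_list_set: "t \<le> n \<Longrightarrow> set (filter (\<lambda>l. l \<noteq> s) ([t+1..<n+1] @ [1..<t])) = {1..n} - {s, t}"
  by auto

lemma cw_list_distinct: "distinct (filter (\<lambda>l. l \<noteq> s) ([t+1..<n+1] @ [1..<t]))"
  by (auto simp: distinct_append)

lemma count_cw:
  fixes s t a b l :: nat
  assumes "s \<noteq> t" "s \<in> {1..n}" "t \<in> {1..n}" "a \<in> {1..n}" "b \<in> {1..n}" "l \<in> {1..n}"
    "a \<noteq> b" "a \<noteq> l" "b \<noteq> l"
  shows "count_list (c_word n s t) {a, b, l} =
    (if (s = a \<and> t = b \<or> s = b \<and> t = a) then 1 else 0) +
    (if (s = a \<and> t = l \<or> s = l \<and> t = a) then 1 else 0) +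
    (if (s = b \<and> t = l \<or> s = l \<and> t = b) then 1 else 0)"
proof -
  let ?Q = "filter (\<lambda>l. l \<noteq> s) ([t+1..<n+1] @ [1..<t])"
  have c: "c_word n s t = map (\<lambda>x. {s, t, x}) ?Q" by (simp add: c_word_def)
  have st: "set ?Q = {1..n} - {s, t}" using assms by (intro cw_list_set) auto
  show ?thesis unfolding c
    apply (subst count_map3)
    using assms cw_list_distinct[of s t n] st by auto
qed

definition cnt3 :: "nat \<Rightarrow> nat \<Rightarrow> nat \<Rightarrow> nat \<Rightarrow> nat \<Rightarrow> nat" where
  "cnt3 s t a b l = (if (s = a \<and> t = b \<or> s = b \<and> t = a) then 1 else 0) +
    (if (s = a \<and> t = l \<or> s = l \<and> t = a) then 1 else 0) +
    (if (s = b \<and> t = l \<or> s = l \<and> t = b) then 1 else 0)"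

lemma ic_cw:
  assumes "s \<noteq> t" "s \<in> {1..n}" "t \<in> {1..n}" "i \<in> {1..n}" "j \<in> {1..n}" "k \<in> {1..n}"
    "i \<noteq> j" "i \<noteq> k" "j \<noteq> k"
  shows "i_c n i j k (c_word n s t) = (\<lambda>l. if l \<in> {1..n} - {i, j, k} then
      (odd (cnt3 s t j k l + cnt3 s t i j l), odd (cnt3 s t i k l + cnt3 s t i j l)) else (False, False))"
proof (rule ext)
  fix l
  show "i_c n i j k (c_word n s t) l = (if l \<in> {1..n} - {i, j, k} then
      (odd (cnt3 s t j k l + cnt3 s t i j l), odd (cnt3 s t i k l + cnt3 s t i j l)) else (False, False))"
  proof (cases "l \<in> {1..n} - {i, j, k}")
    case True
    have c1: "count_list (c_word n s t) {j, k, l} = cnt3 s t j k l"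
      using True assms unfolding cnt3_def by (intro count_cw) auto
    have c2: "count_list (c_word n s t) {i, j, l} = cnt3 s t i j l"
      using True assms unfolding cnt3_def by (intro count_cw) auto
    have c3: "count_list (c_word n s t) {i, k, l} = cnt3 s t i k l"
      using True assms unfolding cnt3_def by (intro count_cw) auto
    show ?thesis using True unfolding i_c_def c1 c2 c3 by simp
  next
    case False
    show ?thesis unfolding i_c_def by (simp only: False if_False)
  qed
qed

definition Pw :: "nat \<Rightarrow> nat \<Rightarrow> nat \<Rightarrow> nat set list" where
  "Pw n s t = concat (map (c_word n s) (rev [s+1..<t]))"

lemma phi_gen_Pw: "phi_gen n s t = rev (Pw n s t) @ c_word n s t @ c_word n s t @ Pw n s t"
  by (simp add: phi_gen_def Pw_def Let_def)

lemma R_i: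
  assumes "1 \<le> i" "i < j" "j < k" "k \<le> n" "i < a" "t \<le> n + 1" "\<forall>x. a \<le> x \<and> x < t \<longrightarrow> x \<noteq> j \<and> x \<noteq> k"
  shows "i_c n i j k (concat (map (c_word n i) (rev [a..<t]))) =
    (\<lambda>l. if l \<in> {1..n} - {i, j, k} then (a \<le> l \<and> l < t, False) else (False, False))"
  using assms
proof (induction t)
  case 0 then show ?case by (auto simp: Z0_def)
next
  case (Suc t)
  show ?case
  proof (cases "a \<le> t")
    case False
    then have "[a..<Suc t] = []" by simp
    then show ?thesis using False by (auto simp: Z0_def)
  next
    case True
    have r: "rev [a..<Suc t] = t # rev [a..<t]" using True by simp
    have IH: "i_c n i j k (concat (map (c_word n i) (rev [a..<t]))) =
    (\<lambda>l. if l \<in> {1..n} - {i, j, k} then (a \<le> l \<and> l < t, False) else (False, False))"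
      using Suc by auto
    have tj: "t \<noteq> j" "t \<noteq> k" using Suc.prems True by auto
    have cw: "i_c n i j k (c_word n i t) = (\<lambda>l. if l \<in> {1..n} - {i, j, k} then
      (odd (cnt3 i t j k l + cnt3 i t i j l), odd (cnt3 i t i k l + cnt3 i t i j l)) else (False, False))"
      using Suc.prems True by (intro ic_cw) auto
    show ?thesis unfolding r list.map concat.simps ic_append IH cw
      using tj Suc.prems True by (intro ext) (auto simp: fx_def pxor_def cnt3_def)
  qed
qed

lemma R_j:
  assumes "1 \<le> i" "i < j" "j < k" "k \<le> n" "j < a" "t \<le> n + 1" "\<forall>x. a \<le> x \<and> x < t \<longrightarrow> x \<noteq> k"
  shows "i_c n i j k (concat (map (c_word n j) (rev [a..<t]))) =
    (\<lambda>l. if l \<in> {1..n} - {i, j, k} then (False, a \<le> l \<and> l < t) else (False, False))"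
  using assms
proof (induction t)
  case 0 then show ?case by (auto simp: Z0_def)
next
  case (Suc t)
  show ?case
  proof (cases "a \<le> t")
    case False
    then have "[a..<Suc t] = []" by simp
    then show ?thesis using False by (auto simp: Z0_def)
  next
    case True
    have r: "rev [a..<Suc t] = t # rev [a..<t]" using True by simp
    have IH: "i_c n i j k (concat (map (c_word n j) (rev [a..<t]))) =
    (\<lambda>l. if l \<in> {1..n} - {i, j, k} then (False, a \<le> l \<and> l < t) else (False, False))"
      using Suc by auto
    have tj: "t \<noteq> i" "t \<noteq> j" "t \<noteq> k" using Suc.prems True by auto
    have cw: "i_c n i j k (c_word n j t) = (\<lambda>l. if l \<in> {1..n} - {i, j, k} then
      (odd (cnt3 j t j k l + cnt3 j t i j l), odd (cnt3 j t i k l + cnt3 j t i j l)) else (False, False))"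
      using Suc.prems True by (intro ic_cw) auto
    show ?thesis unfolding r list.map concat.simps ic_append IH cw
      using tj Suc.prems True by (intro ext) (auto simp: fx_def pxor_def cnt3_def)
  qed
qed



lemma upt_split: "a \<le> b \<Longrightarrow> b \<le> c \<Longrightarrow> [a..<c] = [a..<b] @ [b..<c]"
  by (metis le_add_diff_inverse upt_add_eq_append)

lemma PG:
  assumes "i \<noteq> j" "i \<noteq> k" "j \<noteq> k"
  shows "emt n i j k [] (phi_gen n s t) =
   rev (map (fx (i_c n i j k (Pw n s t))) (emt n i j k [] (Pw n s t))) @
   map (fx (i_c n i j k (Pw n s t))) (emt n i j k [] (c_word n s t)) @
   map (\<lambda>x. fx (i_c n i j k (Pw n s t)) (fx (i_c n i j k (c_word n s t)) x)) (emt n i j k [] (c_word n s t)) @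
   map (fx (i_c n i j k (Pw n s t))) (emt n i j k [] (Pw n s t))"
  unfolding phi_gen_Pw emt_append0 emt_rev[OF assms] ic_rev ic_append
  by (simp add: fx_self2 comp_def)

lemma in_T: "{s, t, x} = {i, j, k} \<Longrightarrow> s \<in> {i, j, k} \<and> t \<in> {i, j, k} \<and> x \<in> {i, j, k}"
  by (metis insertCI)

lemma NT: "\<forall>x\<in>set Q. x \<notin> {i, j, k} \<Longrightarrow> {i, j, k} \<notin> set (map (\<lambda>x. {s, t, x}) Q)"
  using in_T by fastforce

lemma NT_cw: "s \<notin> {i, j, k} \<or> t \<notin> {i, j, k} \<Longrightarrow> {i, j, k} \<notin> set (c_word n s t)"
  unfolding c_word_def using in_T by fastforce

lemma NT_Pw: "\<forall>x\<in>set L. s \<notin> {i, j, k} \<or> x \<notin> {i, j, k} \<Longrightarrow> {i, j, k} \<notin> set (concat (map (c_word n s) L))"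
  using NT_cw by fastforce

lemma EM1: "{i, j, k} \<notin> set A \<Longrightarrow> {i, j, k} \<notin> set B \<Longrightarrow>
  emt n i j k [] (A @ {i, j, k} # B) = [i_c n i j k A]"
  using emt_append0[of n i j k A "{i, j, k} # B"] emt_none[of i j k A n "[]"] emt_none[of i j k B n "[{i,j,k}]"]
  by simp

definition cntQ :: "nat list \<Rightarrow> nat \<Rightarrow> nat \<Rightarrow> nat \<Rightarrow> nat \<Rightarrow> nat \<Rightarrow> nat" where
  "cntQ Q s t a b l = (if l \<in> set Q \<and> (s = a \<and> t = b \<or> s = b \<and> t = a) then 1 else 0) +
    (if b \<in> set Q \<and> (s = a \<and> t = l \<or> s = l \<and> t = a) then 1 else 0) +
    (if a \<in> set Q \<and> (s = b \<and> t = l \<or> s = l \<and> t = b) then 1 else 0)"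

lemma ic_map:
  assumes "distinct Q" "s \<notin> set Q" "t \<notin> set Q" "s \<noteq> t" "i \<noteq> j" "i \<noteq> k" "j \<noteq> k"
  shows "i_c n i j k (map (\<lambda>x. {s, t, x}) Q) = (\<lambda>l. if l \<in> {1..n} - {i, j, k} then
      (odd (cntQ Q s t j k l + cntQ Q s t i j l), odd (cntQ Q s t i k l + cntQ Q s t i j l)) else (False, False))"
proof (rule ext)
  fix l
  show "i_c n i j k (map (\<lambda>x. {s, t, x}) Q) l = (if l \<in> {1..n} - {i, j, k} then
      (odd (cntQ Q s t j k l + cntQ Q s t i j l), odd (cntQ Q s t i k l + cntQ Q s t i j l)) else (False, False))"
  proof (cases "l \<in> {1..n} - {i, j, k}")
    case True
    have c1: "count_list (map (\<lambda>x. {s, t, x}) Q) {j, k, l} = cntQ Q s t j k l"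
      using True assms unfolding cntQ_def by (intro count_map3) auto
    have c2: "count_list (map (\<lambda>x. {s, t, x}) Q) {i, j, l} = cntQ Q s t i j l"
      using True assms unfolding cntQ_def by (intro count_map3) auto
    have c3: "count_list (map (\<lambda>x. {s, t, x}) Q) {i, k, l} = cntQ Q s t i k l"
      using True assms unfolding cntQ_def by (intro count_map3) auto
    show ?thesis using True unfolding i_c_def c1 c2 c3 by simp
  next
    case False
    show ?thesis unfolding i_c_def by (simp only: False if_False)
  qed
qed

definition uL :: "nat \<Rightarrow> nat \<Rightarrow> nat \<Rightarrow> nat \<Rightarrow> nat \<Rightarrow> bool \<times> bool" where
  "uL n i j k = (\<lambda>l. if l \<in> {1..n} - {i, j, k} then (i < l \<and> l < k, j < l \<and> l < k) else (False, False))"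
definition vL :: "nat \<Rightarrow> nat \<Rightarrow> nat \<Rightarrow> nat \<Rightarrow> nat \<Rightarrow> bool \<times> bool" where
  "vL n i j k = (\<lambda>l. if l \<in> {1..n} - {i, j, k} then (l < i \<or> k < l, l < j \<or> k < l) else (False, False))"
definition zL :: "nat \<Rightarrow> nat \<Rightarrow> nat \<Rightarrow> nat \<Rightarrow> nat \<Rightarrow> bool \<times> bool" where
  "zL n i j k = (\<lambda>l. if l \<in> {1..n} - {i, j, k} then (l < i \<or> k < l, j < l \<and> l < k) else (False, False))"


definition dm :: "nat \<Rightarrow> nat \<Rightarrow> nat \<Rightarrow> nat \<Rightarrow> nat \<Rightarrow> bool" where
  "dm n i j k l \<longleftrightarrow> l \<in> {1..n} - {i, j, k}"

lemma ic_cij: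
  assumes "1 \<le> i" "i < j" "j < k" "k \<le> n"
  shows "i_c n i j k (c_word n i j) = (\<lambda>l. if l \<in> {1..n} - {i, j, k} then (True, True) else (False, False))"
  using assms by (subst ic_cw) (auto intro!: ext simp: cnt3_def)

lemma ic_cjk:
  assumes "1 \<le> i" "i < j" "j < k" "k \<le> n"
  shows "i_c n i j k (c_word n j k) = (\<lambda>l. if l \<in> {1..n} - {i, j, k} then (True, False) else (False, False))"
  using assms by (subst ic_cw) (auto intro!: ext simp: cnt3_def)

lemma ic_cik:
  assumes "1 \<le> i" "i < j" "j < k" "k \<le> n"
  shows "i_c n i j k (c_word n i k) = (\<lambda>l. if l \<in> {1..n} - {i, j, k} then (False, True) else (False, False))"
  using assms by (subst ic_cw) (auto intro!: ext simp: cnt3_def)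

lemma ec_ij:
  assumes "1 \<le> i" "i < j" "j < k" "k \<le> n"
  shows "emt n i j k [] (c_word n i j) = [(\<lambda>l. if l \<in> {1..n} - {i, j, k} then (j < l \<and> l < k, j < l \<and> l < k) else (False, False))]"
proof -
  have L: "filter (\<lambda>l. l \<noteq> i) ([j+1..<n+1] @ [1..<j]) = [j+1..<k] @ k # ([k+1..<n+1] @ filter (\<lambda>l. l \<noteq> i) [1..<j])"
  proof -
    have e0: "[j+1..<n+1] = [j+1..<k] @ [k..<n+1]" using assms by (intro upt_split) auto
    have e1: "[k..<n+1] = k # [k+1..<n+1]" using assms by (subst upt_conv_Cons) (auto simp del: upt_Suc)
    have e2: "filter (\<lambda>l. l \<noteq> i) [j+1..<n+1] = [j+1..<n+1]" using assms by (intro filter_True) auto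
    show ?thesis unfolding filter_append e2 unfolding e0 e1 by (simp del: upt_Suc)
  qed
  have c: "c_word n i j = map (\<lambda>x. {i, j, x}) [j+1..<k] @ {i, j, k} #
      map (\<lambda>x. {i, j, x}) ([k+1..<n+1] @ filter (\<lambda>l. l \<noteq> i) [1..<j])"
    unfolding c_word_def L by simp
  have ec: "emt n i j k [] (c_word n i j) = [i_c n i j k (map (\<lambda>x. {i, j, x}) [j+1..<k])]"
    unfolding c using assms by (intro EM1 NT) auto
  show ?thesis unfolding ec using assms
    by (subst ic_map) (auto intro!: ext simp: cntQ_def)
qed

lemma ec_jk:
  assumes "1 \<le> i" "i < j" "j < k" "k \<le> n"
  shows "emt n i j k [] (c_word n j k) = [(\<lambda>l. if l \<in> {1..n} - {i, j, k} then (k < l \<or> l < i, False) else (False, False))]"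
proof -
  have L: "filter (\<lambda>l. l \<noteq> j) ([k+1..<n+1] @ [1..<k]) = ([k+1..<n+1] @ [1..<i]) @ i # filter (\<lambda>l. l \<noteq> j) [i+1..<k]"
  proof -
    have e0: "[1..<k] = [1..<i] @ [i..<k]" using assms by (intro upt_split) auto
    have e1: "[i..<k] = i # [i+1..<k]" using assms by (subst upt_conv_Cons) (auto simp del: upt_Suc)
    have e2: "filter (\<lambda>l. l \<noteq> j) [k+1..<n+1] = [k+1..<n+1]" using assms by (intro filter_True) auto
    have e3: "filter (\<lambda>l. l \<noteq> j) [1..<i] = [1..<i]" using assms by (intro filter_True) auto
    show ?thesis unfolding filter_append e2 unfolding e0 e1 filter_append e3 using assms by (simp del: upt_Suc)
  qed
  have c: "c_word n j k = map (\<lambda>x. {j, k, x}) ([k+1..<n+1] @ [1..<i]) @ {i, j, k} #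
      map (\<lambda>x. {j, k, x}) (filter (\<lambda>l. l \<noteq> j) [i+1..<k])"
    unfolding c_word_def L by (simp add: insert_commute)
  have ec: "emt n i j k [] (c_word n j k) = [i_c n i j k (map (\<lambda>x. {j, k, x}) ([k+1..<n+1] @ [1..<i]))]"
    unfolding c using assms by (intro EM1 NT) auto
  show ?thesis unfolding ec using assms
    by (subst ic_map) (auto intro!: ext simp: cntQ_def distinct_append)
qed

lemma ec_ik:
  assumes "1 \<le> i" "i < j" "j < k" "k \<le> n"
  shows "emt n i j k [] (c_word n i k) = [(\<lambda>l. if l \<in> {1..n} - {i, j, k} then (False, k < l \<or> l < j) else (False, False))]"
proof -
  have L: "filter (\<lambda>l. l \<noteq> i) ([k+1..<n+1] @ [1..<k]) = ([k+1..<n+1] @ filter (\<lambda>l. l \<noteq> i) [1..<j]) @ j # [j+1..<k]"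
  proof -
    have e0: "[1..<k] = [1..<j] @ [j..<k]" using assms by (intro upt_split) auto
    have e1: "[j..<k] = j # [j+1..<k]" using assms by (subst upt_conv_Cons) (auto simp del: upt_Suc)
    have e2: "filter (\<lambda>l. l \<noteq> i) [k+1..<n+1] = [k+1..<n+1]" using assms by (intro filter_True) auto
    have e3: "filter (\<lambda>l. l \<noteq> i) [j+1..<k] = [j+1..<k]" using assms by (intro filter_True) auto
    show ?thesis unfolding filter_append e2 unfolding e0 e1 filter_append using assms e3 by (simp del: upt_Suc)
  qed
  have c: "c_word n i k = map (\<lambda>x. {i, k, x}) ([k+1..<n+1] @ filter (\<lambda>l. l \<noteq> i) [1..<j]) @ {i, j, k} #
      map (\<lambda>x. {i, k, x}) [j+1..<k]"
    unfolding c_word_def L by (simp add: insert_commute)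
  have ec: "emt n i j k [] (c_word n i k) = [i_c n i j k (map (\<lambda>x. {i, k, x}) ([k+1..<n+1] @ filter (\<lambda>l. l \<noteq> i) [1..<j]))]"
    unfolding c using assms by (intro EM1 NT) auto
  show ?thesis unfolding ec using assms
    by (subst ic_map) (auto intro!: ext simp: cntQ_def distinct_append)
qed

lemma case_ij:
  assumes "1 \<le> i" "i < j" "j < k" "k \<le> n"
  shows "emt n i j k [] (phi_gen n i j) = [uL n i j k, vL n i j k]"
proof -
  have d: "i \<noteq> j" "i \<noteq> k" "j \<noteq> k" using assms by auto
  have P0: "emt n i j k [] (Pw n i j) = []"
    unfolding Pw_def using assms by (intro emt_none NT_Pw) auto
  have sig: "i_c n i j k (Pw n i j) =
    (\<lambda>l. if l \<in> {1..n} - {i, j, k} then (i + 1 \<le> l \<and> l < j, False) else (False, False))"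
    unfolding Pw_def using assms by (intro R_i) auto
  show ?thesis unfolding PG[OF d] P0 sig ec_ij[OF assms] ic_cij[OF assms]
    using assms by (auto intro!: ext simp: fx_def pxor_def uL_def vL_def)
qed

lemma case_jk:
  assumes "1 \<le> i" "i < j" "j < k" "k \<le> n"
  shows "emt n i j k [] (phi_gen n j k) = [zL n i j k, uL n i j k]"
proof -
  have d: "i \<noteq> j" "i \<noteq> k" "j \<noteq> k" using assms by auto
  have P0: "emt n i j k [] (Pw n j k) = []"
    unfolding Pw_def using assms by (intro emt_none NT_Pw) auto
  have sig: "i_c n i j k (Pw n j k) =
    (\<lambda>l. if l \<in> {1..n} - {i, j, k} then (False, j + 1 \<le> l \<and> l < k) else (False, False))"
    unfolding Pw_def using assms by (intro R_j) auto
  show ?thesis unfolding PG[OF d] P0 sig ec_jk[OF assms] ic_cjk[OF assms]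
    using assms by (auto intro!: ext simp: fx_def pxor_def uL_def zL_def)
qed

lemma case_ik:
  assumes "1 \<le> i" "i < j" "j < k" "k \<le> n"
  shows "feq (emt n i j k [] (phi_gen n i k)) [vL n i j k, zL n i j k]"
proof -
  have d: "i \<noteq> j" "i \<noteq> k" "j \<noteq> k" using assms by auto
  define P' where "P' = concat (map (c_word n i) (rev [j+1..<k]))"
  have r: "rev [i+1..<k] = rev [j+1..<k] @ j # rev [i+1..<j]"
  proof -
    have e0: "[i+1..<k] = [i+1..<j] @ [j..<k]" using assms by (intro upt_split) auto
    have e1: "[j..<k] = j # [j+1..<k]" using assms by (subst upt_conv_Cons) (auto simp del: upt_Suc)
    show ?thesis unfolding e0 e1 by (simp del: upt_Suc)
  qed
  have Pik: "Pw n i k = P' @ c_word n i j @ Pw n i j"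
    unfolding Pw_def P'_def r by simp
  have P0: "emt n i j k [] (Pw n i j) = []"
    unfolding Pw_def using assms by (intro emt_none NT_Pw) auto
  have P0': "emt n i j k [] P' = []"
    unfolding P'_def using assms by (intro emt_none NT_Pw) auto
  have sig: "i_c n i j k (Pw n i j) =
    (\<lambda>l. if l \<in> {1..n} - {i, j, k} then (i + 1 \<le> l \<and> l < j, False) else (False, False))"
    unfolding Pw_def using assms by (intro R_i) auto
  have sig': "i_c n i j k P' =
    (\<lambda>l. if l \<in> {1..n} - {i, j, k} then (j + 1 \<le> l \<and> l < k, False) else (False, False))"
    unfolding P'_def using assms by (intro R_i) auto
  have ePik: "emt n i j k [] (Pw n i k) = [fx (i_c n i j k P') (\<lambda>l. if l \<in> {1..n} - {i, j, k} then (j < l \<and> l < k, j < l \<and> l < k) else (False, False))]"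
    unfolding Pik emt_append0 P0 P0' ec_ij[OF assms] by simp
  have iPik: "i_c n i j k (Pw n i k) = fx (i_c n i j k P') (fx (i_c n i j k (c_word n i j)) (i_c n i j k (Pw n i j)))"
    unfolding Pik ic_append ..
  have x: "fx (i_c n i j k (Pw n i k)) (fx (i_c n i j k P') (\<lambda>l. if l \<in> {1..n} - {i, j, k} then (j < l \<and> l < k, j < l \<and> l < k) else (False, False)))
     = vL n i j k"
    unfolding iPik sig sig' ic_cij[OF assms] using assms by (auto intro!: ext simp: fx_def pxor_def vL_def)
  have y1: "fx (i_c n i j k (Pw n i k)) (\<lambda>l. if l \<in> {1..n} - {i, j, k} then (False, k < l \<or> l < j) else (False, False))
     = zL n i j k"
    unfolding iPik sig sig' ic_cij[OF assms] using assms by (auto intro!: ext simp: fx_def pxor_def zL_def)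
  have y2: "fx (i_c n i j k (Pw n i k)) (fx (i_c n i j k (c_word n i k)) (\<lambda>l. if l \<in> {1..n} - {i, j, k} then (False, k < l \<or> l < j) else (False, False)))
     = vL n i j k"
    unfolding iPik sig sig' ic_cij[OF assms] ic_cik[OF assms] using assms by (auto intro!: ext simp: fx_def pxor_def vL_def)
  have "emt n i j k [] (phi_gen n i k) = [vL n i j k, zL n i j k] @ [vL n i j k, vL n i j k] @ []"
    unfolding PG[OF d] ePik ec_ik[OF assms] using x y1 y2 by simp
  then show ?thesis using feq_cancel[of "[vL n i j k, zL n i j k]" "vL n i j k" "[]"] by simp
qed



definition sw :: "(nat \<Rightarrow> nat) \<Rightarrow> nat \<Rightarrow> (nat \<Rightarrow> nat)" where
  "sw p a = p(a := p (Suc a), Suc a := p a)"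

lemma sw_apply: "sw p a x = (if x = Suc a then p a else if x = a then p (Suc a) else p x)"
  by (simp add: sw_def)

lemma sw_sw[simp]: "sw (sw p a) a = p"
  by (rule ext) (simp add: sw_apply)

lemma inj_sw: "inj p \<Longrightarrow> inj (sw p a)"
  unfolding inj_def sw_apply by (metis n_not_Suc_n)

definition emit :: "nat set \<Rightarrow> (nat \<Rightarrow> 'a) \<Rightarrow> (nat \<Rightarrow> nat) \<Rightarrow> nat \<Rightarrow> bool \<Rightarrow> 'a list" where
  "emit Tr L p a e = (if p a \<in> Tr \<and> p (Suc a) \<in> Tr then [L (if e then p (Suc a) else p a)] else [])"

fun bst :: "(nat \<Rightarrow> nat) \<Rightarrow> bword \<Rightarrow> (nat \<Rightarrow> nat)" where
  "bst p [] = p"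
| "bst p ((a, e) # w) = bst (sw p a) w"

fun bval :: "nat set \<Rightarrow> (nat \<Rightarrow> 'a) \<Rightarrow> (nat \<Rightarrow> nat) \<Rightarrow> bword \<Rightarrow> 'a list" where
  "bval Tr L p [] = []"
| "bval Tr L p ((a, e) # w) = emit Tr L p a e @ bval Tr L (sw p a) w"

lemma bst_append[simp]: "bst p (u @ v) = bst (bst p u) v"
  by (induction p u rule: bst.induct) auto

lemma bval_append[simp]: "bval Tr L p (u @ v) = bval Tr L p u @ bval Tr L (bst p u) v"
  by (induction Tr L p u rule: bval.induct) auto

lemma inj_bst: "inj p \<Longrightarrow> inj (bst p w)"
  by (induction p w rule: bst.induct) (auto simp: inj_sw)

lemma emit_sw: "emit Tr L (sw p a) a (\<not> e) = emit Tr L p a e"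
  by (auto simp: emit_def sw_apply)

lemma binv_cons: "binv ((a, e) # w) = binv w @ [(a, \<not> e)]"
  by (simp add: binv_def)

lemma binv_props: "bst (bst p w) (binv w) = p \<and> bval Tr L (bst p w) (binv w) = rev (bval Tr L p w)"
proof (induction w arbitrary: p)
  case Nil then show ?case by (simp add: binv_def)
next
  case (Cons x w)
  obtain a e where x: "x = (a, e)" by (metis prod.collapse)
  have "emit Tr L (sw p a) a (\<not> e) = emit Tr L p a e" by (rule emit_sw)
  moreover have "rev (emit Tr L p a e) = emit Tr L p a e" by (simp add: emit_def)
  ultimately show ?case using Cons[of "sw p a"] by (simp add: x binv_cons)
qed

lemma pigeon4:
  fixes w1 w2 w3 w4 :: nat
  assumes "w1 \<in> {a1, a2, a3}" "w2 \<in> {a1, a2, a3}" "w3 \<in> {a1, a2, a3}" "w4 \<in> {a1, a2, a3}"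
    "w1 \<noteq> w2" "w1 \<noteq> w3" "w1 \<noteq> w4" "w2 \<noteq> w3" "w2 \<noteq> w4" "w3 \<noteq> w4"
  shows False
  using assms by auto

lemma step_inv:
  assumes "braid_step m u v" "inj p" "Tr = {a1, a2, a3}"
  shows "bst p u = bst p v \<and> feq (bval Tr L p u) (bval Tr L p v)"
  using assms
proof (induction rule: braid_step.induct)
  case (free_red a xs e ys)
  let ?q = "bst p xs"
  have s: "bst ?q [(a, e), (a, \<not> e)] = ?q" by simp
  have "bval Tr L ?q [(a, e), (a, \<not> e)] = emit Tr L ?q a e @ emit Tr L ?q a e"
    using emit_sw[of Tr L ?q a e] by simp
  moreover have "feq (emit Tr L ?q a e @ emit Tr L ?q a e) []"
  proof -
    have c: "\<And>s. feq [s, s] []" using feq_cancel[of "[]" _ "[]"] by simp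
    show ?thesis unfolding emit_def using c by (cases e) auto
  qed
  ultimately have "feq (bval Tr L ?q [(a, e), (a, \<not> e)]) []" by simp
  then have "feq (bval Tr L p xs @ bval Tr L ?q [(a, e), (a, \<not> e)] @ bval Tr L ?q ys) (bval Tr L p xs @ [] @ bval Tr L ?q ys)"
    by (rule feq_ctx)
  then show ?case using s by simp
next
  case (far_comm a b xs ys)
  let ?q = "bst p xs"
  have iq: "inj ?q" using far_comm inj_bst by blast
  have s: "sw (sw ?q a) b = sw (sw ?q b) a"
    using far_comm by (intro ext) (auto simp: sw_apply)
  have e1: "emit Tr L (sw ?q a) b True = emit Tr L ?q b True"
    using far_comm by (simp add: emit_def sw_apply)
  have e2: "emit Tr L (sw ?q b) a True = emit Tr L ?q a True"
    using far_comm by (simp add: emit_def sw_apply)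
  have ne: "emit Tr L ?q a True = [] \<or> emit Tr L ?q b True = []"
  proof (rule ccontr)
    assume "\<not> ?thesis"
    then have "?q a \<in> Tr" "?q (Suc a) \<in> Tr" "?q b \<in> Tr" "?q (Suc b) \<in> Tr"
      by (auto simp: emit_def split: if_splits)
    moreover have "?q a \<noteq> ?q (Suc a)" "?q a \<noteq> ?q b" "?q a \<noteq> ?q (Suc b)"
        "?q (Suc a) \<noteq> ?q b" "?q (Suc a) \<noteq> ?q (Suc b)" "?q b \<noteq> ?q (Suc b)"
    proof -
      have D: "\<And>x y. x \<noteq> y \<Longrightarrow> ?q x \<noteq> ?q y" using iq by (meson injD)
      have "a \<noteq> Suc a" "a \<noteq> b" "a \<noteq> Suc b" "Suc a \<noteq> b" "Suc a \<noteq> Suc b" "b \<noteq> Suc b"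
        using far_comm(5) by arith+
      then show "?q a \<noteq> ?q (Suc a)" "?q a \<noteq> ?q b" "?q a \<noteq> ?q (Suc b)"
        "?q (Suc a) \<noteq> ?q b" "?q (Suc a) \<noteq> ?q (Suc b)" "?q b \<noteq> ?q (Suc b)"
        using D by blast+
    qed
    ultimately show False using far_comm(7) by (intro pigeon4[of "?q a" a1 a2 a3 "?q (Suc a)" "?q b" "?q (Suc b)"]) simp_all
  qed
  have "bval Tr L ?q [(a, True), (b, True)] = bval Tr L ?q [(b, True), (a, True)]"
    using ne e1 e2 by auto
  then have "feq (bval Tr L p xs @ bval Tr L ?q [(a, True), (b, True)] @ bval Tr L (sw (sw ?q a) b) ys)
     (bval Tr L p xs @ bval Tr L ?q [(b, True), (a, True)] @ bval Tr L (sw (sw ?q a) b) ys)"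
    by simp
  then show ?case using s by simp
next
  case (braid_rel a xs ys)
  let ?q = "bst p xs"
  have s: "sw (sw (sw ?q a) (Suc a)) a = sw (sw (sw ?q (Suc a)) a) (Suc a)"
    by (intro ext) (auto simp: sw_apply)
  define x where "x = ?q a"
  define y where "y = ?q (Suc a)"
  define z where "z = ?q (Suc (Suc a))"
  have l: "bval Tr L ?q [(a, True), (a + 1, True), (a, True)] =
     (if x \<in> Tr \<and> y \<in> Tr then [L y] else []) @ (if x \<in> Tr \<and> z \<in> Tr then [L z] else []) @
     (if y \<in> Tr \<and> z \<in> Tr then [L z] else [])"
    by (simp add: emit_def sw_apply x_def y_def z_def)
  have r: "bval Tr L ?q [(a + 1, True), (a, True), (a + 1, True)] =
     (if y \<in> Tr \<and> z \<in> Tr then [L z] else []) @ (if x \<in> Tr \<and> z \<in> Tr then [L z] else []) @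
     (if x \<in> Tr \<and> y \<in> Tr then [L y] else [])"
    by (simp add: emit_def sw_apply x_def y_def z_def)
  have f: "feq (bval Tr L ?q [(a, True), (a + 1, True), (a, True)]) (bval Tr L ?q [(a + 1, True), (a, True), (a + 1, True)])"
  proof (cases "x \<in> Tr \<and> y \<in> Tr \<and> z \<in> Tr")
    case True
    have "feq [L y, L z, L z] [L y]" using feq_cancel[of "[L y]" "L z" "[]"] by simp
    moreover have "feq [L z, L z, L y] [L y]" using feq_cancel[of "[]" "L z" "[L y]"] by simp
    ultimately show ?thesis unfolding l r using True by (auto intro: feq_trans feq_sym)
  next
    case False
    then show ?thesis unfolding l r by auto
  qed
  have "feq (bval Tr L p xs @ bval Tr L ?q [(a, True), (a + 1, True), (a, True)] @ bval Tr L (sw (sw (sw ?q a) (Suc a)) a) ys)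
            (bval Tr L p xs @ bval Tr L ?q [(a + 1, True), (a, True), (a + 1, True)] @ bval Tr L (sw (sw (sw ?q a) (Suc a)) a) ys)"
    by (intro feq_append f feq_refl)
  then show ?case using s by simp
qed

lemma trivial_inv:
  assumes "braid_trivial m w" "Tr = {a1, a2, a3}"
  shows "feq (bval Tr L id w) []"
proof -
  have "equivclp (braid_step m) w []" using assms by (simp add: braid_trivial_def)
  then have "feq (bval Tr L id w) (bval Tr L id [])"
  proof (induction rule: equivclp_induct)
    case base then show ?case by simp
  next
    case (step y z)
    have "feq (bval Tr L id y) (bval Tr L id z)"
      using step(2) step_inv[of m _ _ id Tr a1 a2 a3 L] assms(2)
      by (auto intro: feq_sym)
    then show ?case by (rule feq_trans[OF step(3)])
  qed
  then show ?thesis by simp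
qed



definition Rw :: "nat \<Rightarrow> nat \<Rightarrow> bword" where
  "Rw q t = map (\<lambda>a. (a, True)) (rev [q..<t])"

lemma Rw_bst: "q \<le> t \<Longrightarrow> bst p (Rw q t) q = p t \<and> (\<forall>x<q. bst p (Rw q t) x = p x)"
proof (induction t arbitrary: p)
  case 0 then show ?case by (simp add: Rw_def)
next
  case (Suc t)
  show ?case
  proof (cases "q = Suc t")
    case True then show ?thesis by (simp add: Rw_def)
  next
    case False
    then have qt: "q \<le> t" using Suc.prems by simp
    have r: "Rw q (Suc t) = (t, True) # Rw q t" using qt by (simp add: Rw_def)
    have IH: "bst (sw p t) (Rw q t) q = sw p t t \<and> (\<forall>x<q. bst (sw p t) (Rw q t) x = sw p t x)"
      using Suc.IH[OF qt, of "sw p t"] by blast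
    have a1: "sw p t t = p (Suc t)" by (simp add: sw_apply)
    have a2: "\<forall>x<q. sw p t x = p x" using qt by (simp add: sw_apply)
    show ?thesis unfolding r using IH a1 a2 by simp
  qed
qed

lemma Rw_bval: "bval Tr L p (Rw q t) = concat (map (\<lambda>x. if p x \<in> Tr \<and> p t \<in> Tr then [L (p t)] else []) (rev [q..<t]))"
proof (induction t arbitrary: p)
  case 0 then show ?case by (simp add: Rw_def)
next
  case (Suc t)
  show ?case
  proof (cases "q \<le> t")
    case False then show ?thesis by (simp add: Rw_def)
  next
    case True
    have r: "Rw q (Suc t) = (t, True) # Rw q t" using True by (simp add: Rw_def)
    have m: "map (\<lambda>x. if sw p t x \<in> Tr \<and> sw p t t \<in> Tr then [L (sw p t t)] else []) (rev [q..<t])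
      = map (\<lambda>x. if p x \<in> Tr \<and> p (Suc t) \<in> Tr then [L (p (Suc t))] else []) (rev [q..<t])"
      by (rule map_cong) (auto simp: sw_apply)
    show ?thesis unfolding r using Suc.IH[of "sw p t"] m True by (simp add: emit_def)
  qed
qed

lemma pb_gen_Rw: "pb_gen s t = Rw (s+1) t @ [(s, True), (s, True)] @ binv (Rw (s+1) t)"
  by (simp add: pb_gen_def Rw_def binv_def rev_map comp_def)

lemma VG_form:
  assumes "s < t"
  shows "bst id (pb_gen s t) = id \<and> bval Tr L id (pb_gen s t) =
    concat (map (\<lambda>x. if x \<in> Tr \<and> t \<in> Tr then [L t] else []) (rev [s+1..<t])) @
    (if s \<in> Tr \<and> t \<in> Tr then [L t, L s] else []) @
    rev (concat (map (\<lambda>x. if x \<in> Tr \<and> t \<in> Tr then [L t] else []) (rev [s+1..<t])))"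
proof -
  let ?R = "Rw (s+1) t"
  let ?q = "bst id ?R"
  have q1: "?q s = s" "?q (Suc s) = t" using Rw_bst[of "s+1" t id] assms by auto
  have ss: "bst ?q [(s, True), (s, True)] = ?q" by simp
  have b1: "bval Tr L ?q [(s, True), (s, True)] = (if s \<in> Tr \<and> t \<in> Tr then [L t, L s] else [])"
    using q1 by (auto simp: emit_def sw_apply)
  have bp: "bst (bst id ?R) (binv ?R) = id \<and> bval Tr L (bst id ?R) (binv ?R) = rev (bval Tr L id ?R)"
    by (rule binv_props)
  have rv: "bval Tr L id ?R = concat (map (\<lambda>x. if x \<in> Tr \<and> t \<in> Tr then [L t] else []) (rev [s+1..<t]))"
    using Rw_bval[of Tr L id "s+1" t] by (simp cong: if_cong)
  show ?thesis unfolding pb_gen_Rw bval_append bst_append ss b1 using bp unfolding rv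
    by simp
qed

lemma concat_map_nil: "(\<forall>x\<in>set xs. f x = []) \<Longrightarrow> concat (map f xs) = []"
  by (induction xs) auto

definition PVN :: "nat \<Rightarrow> nat \<Rightarrow> nat \<Rightarrow> 'a \<Rightarrow> 'a \<Rightarrow> 'a \<Rightarrow> nat \<Rightarrow> nat \<Rightarrow> 'a list" where
  "PVN a1 a2 a3 u v z s t = (if s = a1 \<and> t = a2 then [u, v] else if s = a1 \<and> t = a3 then [v, z]
     else if s = a2 \<and> t = a3 then [z, u] else [])"

definition Lf :: "nat \<Rightarrow> nat \<Rightarrow> nat \<Rightarrow> 'a \<Rightarrow> 'a \<Rightarrow> 'a \<Rightarrow> nat \<Rightarrow> 'a" where
  "Lf a1 a2 a3 u v z = (\<lambda>x. if x = a1 then v else if x = a2 then u else z)"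

lemma VG_val:
  assumes "a1 < a2" "a2 < a3" "s < t"
  shows "feq (bval {a1, a2, a3} (Lf a1 a2 a3 u v z) id (pb_gen s t)) (PVN a1 a2 a3 u v z s t)"
proof -
  let ?Tr = "{a1, a2, a3}"
  let ?L = "Lf a1 a2 a3 u v z"
  let ?X = "concat (map (\<lambda>x. if x \<in> ?Tr \<and> t \<in> ?Tr then [?L t] else []) (rev [s+1..<t]))"
  have V: "bval ?Tr ?L id (pb_gen s t) = ?X @ (if s \<in> ?Tr \<and> t \<in> ?Tr then [?L t, ?L s] else []) @ rev ?X"
    using VG_form[OF assms(3)] by blast
  have h: "s \<in> ?Tr \<and> t \<in> ?Tr \<Longrightarrow> (s = a1 \<and> t = a2) \<or> (s = a2 \<and> t = a3) \<or> (s = a1 \<and> t = a3)"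
    using assms by auto
  consider "s = a1 \<and> t = a2" | "s = a2 \<and> t = a3" | "s = a1 \<and> t = a3" | "\<not> (s \<in> ?Tr \<and> t \<in> ?Tr)"
    using h by blast
  then show ?thesis
  proof cases
    case 1
    have X0: "?X = []" using 1 assms by (intro concat_map_nil) auto
    show ?thesis unfolding V X0 using 1 assms by (simp add: PVN_def Lf_def)
  next
    case 2
    have X0: "?X = []" using 2 assms by (intro concat_map_nil) auto
    show ?thesis unfolding V X0 using 2 assms by (simp add: PVN_def Lf_def)
  next
    case 3
    have r: "rev [s+1..<t] = rev [a2+1..<a3] @ a2 # rev [s+1..<a2]"
    proof -
      have e0: "[s+1..<t] = [s+1..<a2] @ [a2..<t]" using assms 3 by (intro upt_split) auto
      have e1: "[a2..<t] = a2 # [a2+1..<t]" using assms 3 by (subst upt_conv_Cons) (auto simp del: upt_Suc)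
      show ?thesis unfolding e0 e1 using 3 by (simp del: upt_Suc)
    qed
    have x1: "concat (map (\<lambda>x. if x \<in> ?Tr \<and> t \<in> ?Tr then [?L t] else []) (rev [a2+1..<a3])) = []"
      using 3 assms by (intro concat_map_nil) auto
    have x2: "concat (map (\<lambda>x. if x \<in> ?Tr \<and> t \<in> ?Tr then [?L t] else []) (rev [s+1..<a2])) = []"
      using 3 assms by (intro concat_map_nil) auto
    have "?X = [z]" unfolding r map_append concat_append list.map concat.simps x1 x2 using 3 assms by (simp add: Lf_def)
    then have "bval ?Tr ?L id (pb_gen s t) = [] @ [z, z] @ [v, z]" unfolding V using 3 assms by (simp add: Lf_def)
    then show ?thesis using feq_cancel[of "[]" z "[v, z]"] 3 assms by (simp add: PVN_def)
  next
    case 4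
    then have "bval ?Tr ?L id (pb_gen s t) = ?X @ rev ?X" unfolding V by simp
    moreover have "PVN a1 a2 a3 u v z s t = []" using 4 by (auto simp: PVN_def)
    ultimately show ?thesis using feq_rev_cancel2 by simp
  qed
qed

lemma bst_pb_gen: "bst p (pb_gen s t) = p"
  unfolding pb_gen_Rw bst_append using binv_props[of p "Rw (s+1) t" "{}" "\<lambda>x::nat. x"] by simp

lemma bst_binv_gen: "bst p (binv (pb_gen s t)) = p" "bval Tr L p (binv (pb_gen s t)) = rev (bval Tr L p (pb_gen s t))"
  using binv_props[of p "pb_gen s t" Tr L] by (simp_all add: bst_pb_gen)

lemma VW: "bval Tr L p (pb_expand v) = concat (map (\<lambda>((s, t), e). if e then bval Tr L p (pb_gen s t)
     else rev (bval Tr L p (pb_gen s t))) v)"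
proof (induction v)
  case Nil then show ?case by (simp add: pb_expand_def)
next
  case (Cons x v)
  obtain s t e where x: "x = ((s, t), e)" by (metis prod.collapse)
  have "pb_expand (x # v) = (if e then pb_gen s t else binv (pb_gen s t)) @ pb_expand v"
    by (simp add: pb_expand_def x)
  then show ?case using Cons by (simp add: x bst_pb_gen bst_binv_gen)
qed

lemma phi_val:
  assumes "1 \<le> i" "i < j" "j < k" "k \<le> n" "s < t"
  shows "feq (emt n i j k [] (phi_gen n s t)) (PVN i j k (uL n i j k) (vL n i j k) (zL n i j k) s t)"
proof -
  have d: "i \<noteq> j" "i \<noteq> k" "j \<noteq> k" using assms by auto
  have h: "s \<in> {i, j, k} \<and> t \<in> {i, j, k} \<Longrightarrow> (s = i \<and> t = j) \<or> (s = j \<and> t = k) \<or> (s = i \<and> t = k)"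
    using assms by auto
  consider "s = i \<and> t = j" | "s = j \<and> t = k" | "s = i \<and> t = k" | "s \<notin> {i, j, k}" | "s \<in> {i, j, k} \<and> t \<notin> {i, j, k}"
    using h by blast
  then show ?thesis
  proof cases
    case 1 then show ?thesis using case_ij[OF assms(1-4)] d by (simp add: PVN_def)
  next
    case 2 then show ?thesis using case_jk[OF assms(1-4)] d by (simp add: PVN_def)
  next
    case 3 then show ?thesis using case_ik[OF assms(1-4)] d by (simp add: PVN_def)
  next
    case 4
    have "{i, j, k} \<notin> set (phi_gen n s t)"
      unfolding phi_gen_Pw Pw_def using 4 NT_cw[of s i j k] NT_Pw[of _ s i j k] by auto
    then have "emt n i j k [] (phi_gen n s t) = []" by (rule emt_none)
    moreover have "PVN i j k (uL n i j k) (vL n i j k) (zL n i j k) s t = []" using 4 by (auto simp: PVN_def)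
    ultimately show ?thesis by simp
  next
    case 5
    have "emt n i j k [] (c_word n s t) = []" using 5 by (intro emt_none NT_cw) auto
    then have "emt n i j k [] (phi_gen n s t) = rev (map (fx (i_c n i j k (Pw n s t))) (emt n i j k [] (Pw n s t))) @
         map (fx (i_c n i j k (Pw n s t))) (emt n i j k [] (Pw n s t))"
      unfolding PG[OF d] by simp
    moreover have "PVN i j k (uL n i j k) (vL n i j k) (zL n i j k) s t = []" using 5 by (auto simp: PVN_def)
    ultimately show ?thesis using feq_rev_cancel by simp
  qed
qed

lemma rel_eq: "x \<noteq> m \<Longrightarrow> y \<noteq> m \<Longrightarrow> relabel m x = relabel m y \<longleftrightarrow> x = y"
  by (auto simp: relabel_def)

lemma rel_less: "x \<noteq> m \<Longrightarrow> y \<noteq> m \<Longrightarrow> relabel m x < relabel m y \<longleftrightarrow> x < y"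
  by (auto simp: relabel_def)

lemma PVN_rel:
  assumes "s \<noteq> m" "t \<noteq> m" "i \<noteq> m" "j \<noteq> m" "k \<noteq> m"
  shows "PVN (relabel m i) (relabel m j) (relabel m k) u v z (relabel m s) (relabel m t) = PVN i j k u v z s t"
  using assms by (simp add: PVN_def rel_eq)

lemma assemble:
  assumes "1 \<le> i" "i < j" "j < k" "k \<le> n" "m \<notin> {i, j, k}" "pb_word n w"
  shows "feq (concat (map (\<lambda>((s, t), e). if e then emt n i j k [] (phi_gen n s t)
     else rev (emt n i j k [] (phi_gen n s t))) w))
    (concat (map (\<lambda>((s, t), e). if e then bval {relabel m i, relabel m j, relabel m k} (Lf (relabel m i) (relabel m j) (relabel m k) (uL n i j k) (vL n i j k) (zL n i j k)) id (pb_gen s t)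
     else rev (bval {relabel m i, relabel m j, relabel m k} (Lf (relabel m i) (relabel m j) (relabel m k) (uL n i j k) (vL n i j k) (zL n i j k)) id (pb_gen s t))) (delete_strand m w)))"
  using assms(6)
proof (induction w)
  case Nil then show ?case by (simp add: delete_strand_def)
next
  case (Cons x w)
  obtain s t e where x: "x = ((s, t), e)" by (metis prod.collapse)
  have st: "1 \<le> s" "s < t" "t \<le> n" using Cons.prems x by (auto simp: pb_word_def)
  have pw: "pb_word n w" using Cons.prems by (auto simp: pb_word_def)
  let ?a1 = "relabel m i" let ?a2 = "relabel m j" let ?a3 = "relabel m k"
  let ?Tr = "{?a1, ?a2, ?a3}"
  let ?L = "Lf ?a1 ?a2 ?a3 (uL n i j k) (vL n i j k) (zL n i j k)"
  let ?gP = "\<lambda>((s, t), e). if e then emt n i j k [] (phi_gen n s t) else rev (emt n i j k [] (phi_gen n s t))"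
  let ?gV = "\<lambda>((s, t), e). if e then bval ?Tr ?L id (pb_gen s t) else rev (bval ?Tr ?L id (pb_gen s t))"
  have ds: "delete_strand m (x # w) = (if m = s \<or> m = t then [] else [((relabel m s, relabel m t), e)]) @ delete_strand m w"
    by (simp add: delete_strand_def x)
  have P: "feq (emt n i j k [] (phi_gen n s t)) (PVN i j k (uL n i j k) (vL n i j k) (zL n i j k) s t)"
    using phi_val[OF assms(1-4) st(2)] .
  have one: "feq (?gP x) (concat (map ?gV (if m = s \<or> m = t then [] else [((relabel m s, relabel m t), e)])))"
  proof (cases "m = s \<or> m = t")
    case True
    then have "PVN i j k (uL n i j k) (vL n i j k) (zL n i j k) s t = []" using assms(5) by (auto simp: PVN_def)
    then have "feq (?gP x) []" using P feq_rev[OF P] by (simp add: x)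
    then show ?thesis using True by simp
  next
    case False
    have a: "?a1 < ?a2" "?a2 < ?a3" "relabel m s < relabel m t" using assms False st by (auto simp: rel_less)
    have V: "feq (bval ?Tr ?L id (pb_gen (relabel m s) (relabel m t))) (PVN i j k (uL n i j k) (vL n i j k) (zL n i j k) s t)"
    proof -
      have R: "PVN ?a1 ?a2 ?a3 (uL n i j k) (vL n i j k) (zL n i j k) (relabel m s) (relabel m t)
         = PVN i j k (uL n i j k) (vL n i j k) (zL n i j k) s t"
        using False assms(5) by (intro PVN_rel) auto
      show ?thesis using VG_val[OF a, of "uL n i j k" "vL n i j k" "zL n i j k"] unfolding R .
    qed
    have "feq (emt n i j k [] (phi_gen n s t)) (bval ?Tr ?L id (pb_gen (relabel m s) (relabel m t)))"
      by (rule feq_trans[OF P feq_sym[OF V]])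
    note E = this
    have "feq (?gP x) (?gV ((relabel m s, relabel m t), e))"
      using E feq_rev[OF E] by (simp add: x)
    then show ?thesis using False by simp
  qed
  have "feq (concat (map ?gP (x # w))) (concat (map ?gV (if m = s \<or> m = t then [] else [((relabel m s, relabel m t), e)])) @ concat (map ?gV (delete_strand m w)))"
    using feq_append[OF one Cons.IH[OF pw]] by simp
  then show ?case unfolding ds by simp
qed

lemma main_sorted:
  assumes "1 \<le> i" "i < j" "j < k" "k \<le> n" "m \<notin> {i, j, k}" "pb_word n w"
    "braid_trivial (n - 1) (pb_expand (delete_strand m w))"
  shows "F_trivial (phi_ijk n i j k (phi_n n w))"
proof -
  have d: "i \<noteq> j" "i \<noteq> k" "j \<noteq> k" using assms by auto
  let ?Tr = "{relabel m i, relabel m j, relabel m k}"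
  let ?L = "Lf (relabel m i) (relabel m j) (relabel m k) (uL n i j k) (vL n i j k) (zL n i j k)"
  have A: "feq (phi_ijk n i j k (phi_n n w)) (bval ?Tr ?L id (pb_expand (delete_strand m w)))"
    unfolding phi_ijk_emt emt_phi_n[OF d] VW using assemble[OF assms(1-6)] .
  have B: "feq (bval ?Tr ?L id (pb_expand (delete_strand m w))) []"
    using trivial_inv[OF assms(7), of ?Tr "relabel m i" "relabel m j" "relabel m k" ?L] by simp
  show ?thesis unfolding F_trivial_feq by (rule feq_trans[OF A B])
qed



lemma F_trivial_map: "F_trivial w \<Longrightarrow> F_trivial (map h w)"
  unfolding F_trivial_feq using feq_map[of w "[]" h] by simp

lemma ic_swap12: "i_c n j i k pre = (\<lambda>l. prod.swap (i_c n i j k pre l))"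
proof (rule ext)
  fix l
  have sw: "{j, i, l} = {i, j, l}" "{j, i, k} = {i, j, k}" by blast+
  show "i_c n j i k pre l = prod.swap (i_c n i j k pre l)"
    unfolding i_c_def sw by simp
qed

lemma ic_swap23: "i_c n i k j pre = (\<lambda>l. (fst (i_c n i j k pre l) \<noteq> snd (i_c n i j k pre l), snd (i_c n i j k pre l)))"
proof (rule ext)
  fix l
  have sw: "{k, j, l} = {j, k, l}" "{i, k, j} = {i, j, k}" by blast+
  show "i_c n i k j pre l = (fst (i_c n i j k pre l) \<noteq> snd (i_c n i j k pre l), snd (i_c n i j k pre l))"
    unfolding i_c_def sw by (simp, argo)
qed

lemma S12: "F_trivial (phi_ijk n i j k g) \<Longrightarrow> F_trivial (phi_ijk n j i k g)"
proof -
  assume a: "F_trivial (phi_ijk n i j k g)"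
  have sw: "{j, i, k} = {i, j, k}" by blast
  have "phi_ijk n j i k g = map (\<lambda>f l. prod.swap (f l)) (phi_ijk n i j k g)"
    unfolding phi_ijk_def ic_swap12[of n i j k] sw by simp
  then show ?thesis using F_trivial_map[OF a] by simp
qed

lemma S23: "F_trivial (phi_ijk n i j k g) \<Longrightarrow> F_trivial (phi_ijk n i k j g)"
proof -
  assume a: "F_trivial (phi_ijk n i j k g)"
  have sw: "{i, k, j} = {i, j, k}" by blast
  have "phi_ijk n i k j g = map (\<lambda>f l. (fst (f l) \<noteq> snd (f l), snd (f l))) (phi_ijk n i j k g)"
    unfolding phi_ijk_def ic_swap23[of n i k j] sw by simp
  then show ?thesis using F_trivial_map[OF a] by simp
qed

lemma allperm:
  assumes "F_trivial (phi_ijk n a b c g)"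
  shows "F_trivial (phi_ijk n a b c g) \<and> F_trivial (phi_ijk n b a c g) \<and> F_trivial (phi_ijk n a c b g) \<and>
    F_trivial (phi_ijk n b c a g) \<and> F_trivial (phi_ijk n c a b g) \<and> F_trivial (phi_ijk n c b a g)"
proof -
  have 1: "F_trivial (phi_ijk n b a c g)" by (rule S12[OF assms])
  have 2: "F_trivial (phi_ijk n a c b g)" by (rule S23[OF assms])
  have 3: "F_trivial (phi_ijk n b c a g)" by (rule S23[OF 1])
  have 4: "F_trivial (phi_ijk n c a b g)" by (rule S12[OF 2])
  have 5: "F_trivial (phi_ijk n c b a g)" by (rule S23[OF 4])
  show ?thesis using assms 1 2 3 4 5 by blast
qed


theorem mainTheorem2:
  fixes n i j k :: nat and w :: pword
  assumes "n \<ge> 4"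
    and "brunnian n w"
    and "i \<in> {1..n}" and "j \<in> {1..n}" and "k \<in> {1..n}"
    and "i \<noteq> j" and "i \<noteq> k" and "j \<noteq> k"
  shows "F_trivial (phi_ijk n i j k (phi_n n w))"
proof -
  have pw: "pb_word n w" and bt: "\<And>m. m \<in> {1..n} \<Longrightarrow> braid_trivial (n - 1) (pb_expand (delete_strand m w))"
    using assms(2) by (auto simp: brunnian_def)
  have c3: "card {i, j, k} = 3" using assms(6-8) by simp
  have "\<not> {1..n} \<subseteq> {i, j, k}"
  proof
    assume "{1..n} \<subseteq> {i, j, k}"
    then have "card {1..n} \<le> card {i, j, k}" by (intro card_mono) auto
    then show False using c3 assms(1) by simp
  qed
  then obtain m where m: "m \<in> {1..n}" "m \<notin> {i, j, k}" by blast
  have key: "\<And>a b c. 1 \<le> a \<Longrightarrow> a < b \<Longrightarrow> b < c \<Longrightarrow> c \<le> n \<Longrightarrow> m \<notin> {a, b, c} \<Longrightarrow>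
      F_trivial (phi_ijk n a b c (phi_n n w))"
    using main_sorted pw bt[OF m(1)] by blast
  have r: "1 \<le> i" "i \<le> n" "1 \<le> j" "j \<le> n" "1 \<le> k" "k \<le> n" using assms(3-5) by auto
  consider "i < j \<and> j < k" | "i < k \<and> k < j" | "j < i \<and> i < k" | "j < k \<and> k < i" | "k < i \<and> i < j" | "k < j \<and> j < i"
    using assms(6-8) by linarith
  then show ?thesis
  proof cases
    case 1 then show ?thesis using key[of i j k] r m(2) by auto
  next
    case 2 then show ?thesis using allperm[OF key[of i k j]] r m(2) by auto
  next
    case 3 then show ?thesis using allperm[OF key[of j i k]] r m(2) by auto
  next
    case 4 then show ?thesis using allperm[OF key[of j k i]] r m(2) by auto
  next
    case 5 then show ?thesis using allperm[OF key[of k i j]] r m(2) by auto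
  next
    case 6 then show ?thesis using allperm[OF key[of k j i]] r m(2) by auto
  qed
qed

end
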